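(* Let $a^*(\lambda)$ be the density on $[0,9]$ of the push-forward of the normalized Haar measure on $\{|x_1|=|x_2|=1\}$ under $P_2=(1+x_1+x_2)(1+x_1^{-1}+x_2^{-1})$, and let $c(t)=\int_0^1\frac{a^*(\lambda)}{1-t\lambda}d\lambda=\sum_{m\ge0}c_mt^m$. Let $\widetilde{\mathcal L}_2(\lambda,\theta)=9\theta^2-\lambda(10\theta^2+10\theta+3)+\lambda^2(\theta+1)^2$. Then $c_0=\frac14$ and \[ \Bigl[\widetilde{\mathcal L}_2\Bigl(\frac1t,-\theta_t-1\Bigr)c(t)\Bigr]_-=-\frac{6}{\pi^2\,t}. \]
   Context: $\theta_t=t\frac{d}{dt}$. For an operator $\mathcal M(\lambda,\theta)=\sum d_{ij}\lambda^i\theta^j$, $\mathcal M(\frac1t,-\theta_t-1)$ denotes $\sum d_{ij}t^{-i}(-\theta_t-1)^j$. For a Laurent series $\sum_na_nt^n$, $[\sum_na_nt^n]_-=\sum_{n<0}a_nt^n$. *)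

theory Defs
  imports "HOL-Analysis.Analysis" "HOL-Computational_Algebra.Computational_Algebra"
begin

definition theta_t :: "real fls \<Rightarrow> real fls" where
  "theta_t f = fls_X * fls_deriv f"

text \<open>An operator M(lambda,theta) = sum d_ij lambda^i theta^j is encoded as a bivariate
  polynomial: outer variable theta, inner variable lambda, so d_ij = coeff (coeff M j) i.\<close>
definition op_subst :: "real poly poly \<Rightarrow> real fls \<Rightarrow> real fls" where
  "op_subst M f =
     (\<Sum>j\<le>degree M. \<Sum>i\<le>degree (coeff M j).
        fls_const (coeff (coeff M j) i) * fls_X_intpow (- int i)
          * (((\<lambda>g. - theta_t g - g) ^^ j) f))"

definition neg_part :: "real fls \<Rightarrow> real fls" where
  "neg_part f = f - fps_to_fls (fls_regpart f)"

text \<open>L~_2(lambda,theta) = 9 theta^2 - lambda(10 theta^2 + 10 theta + 3) + lambda^2 (theta+1)^2,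
  written as a polynomial in theta with coefficients polynomials in lambda.\<close>
definition Ltilde2 :: "real poly poly" where
  "Ltilde2 = [: [:0, -3, 1:], [:0, -10, 2:], [:9, -10, 1:] :]"

definition P2 :: "complex \<Rightarrow> complex \<Rightarrow> complex" where
  "P2 x1 x2 = (1 + x1 + x2) * (1 + inverse x1 + inverse x2)"

definition haar_T2 :: "(complex \<times> complex) measure" where
  "haar_T2 = distr (uniform_measure lborel ({0..2*pi} \<times> {0..2*pi})) borel
               (\<lambda>(s, u). (cis s, cis u))"

end

theory Submission
  imports Defs
begin

context
  includes fps_syntax
begin
notation fls_nth (infixl "$$" 75)


lemma T_nth: "(- theta_t g - g) $$ n = - (of_int n + 1) * g $$ n"
  by (simp add: theta_t_def fls_X_times_conv_shift algebra_simps)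

lemma Tpow_nth: "(((\<lambda>g. - theta_t g - g) ^^ j) g) $$ n = (- (of_int n + 1)) ^ j * g $$ n"
  by (induction j) (simp_all only: funpow.simps comp_def T_nth, simp_all)

lemma fls_sum_nth: "(sum F A) $$ n = (\<Sum>x\<in>A. F x $$ n)"
  by (induction A rule: infinite_finite_induct) auto

lemma op_subst_nth: "op_subst M f $$ n = (\<Sum>j\<le>degree M. \<Sum>i\<le>degree (coeff M j).
        coeff (coeff M j) i * (- (of_int (n + int i) + 1)) ^ j * f $$ (n + int i))"
proof -
  have h: "(fls_const a * fls_X_intpow k * g) $$ n = a * g $$ (n - k)" for a k and g :: "real fls"
    by (subst mult.assoc, subst fls_X_intpow_times_conv_shift(1)) simp
  show ?thesis unfolding op_subst_def fls_sum_nth h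
    by (simp add: Tpow_nth mult.assoc)
qed

lemma sum3: "(\<Sum>i\<le>2::nat. F i) = F 0 + F 1 + F 2"
  by (simp add: numeral_2_eq_2)

lemma Ltilde2_deg: "degree Ltilde2 = 2" "coeff Ltilde2 0 = [:0, -3, 1:]"
   "coeff Ltilde2 1 = [:0, -10, 2:]" "coeff Ltilde2 (Suc 0) = [:0, -10, 2:]" "coeff Ltilde2 2 = [:9, -10, 1:]"
   "degree [:0, -3, 1::real:] = 2" "degree [:0, -10, 2::real:] = 2" "degree [:9, -10, 1::real:] = 2"
  by (simp_all add: Ltilde2_def numeral_2_eq_2)

lemma neg_op: "neg_part (op_subst Ltilde2 (fps_to_fls c)) = fls_const (c$1 - 3*c$0) * fls_X_inv"
proof (rule fls_eqI)
  fix n :: int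
  have c2: "coeff [:a, b, d:] 2 = d" for a b d :: real by (simp add: numeral_2_eq_2)
  show "neg_part (op_subst Ltilde2 (fps_to_fls c)) $$ n = (fls_const (c$1 - 3*c$0) * fls_X_inv) $$ n"
    unfolding neg_part_def
    apply (simp add: op_subst_nth Ltilde2_deg sum3 c2)
    apply (intro impI)
    apply (subgoal_tac "n = -2")
     apply (simp add: power2_eq_square)
    apply linarith
    done
qed

end


definition Fq :: "real \<Rightarrow> real \<Rightarrow> real" where
  "Fq s u = 3 + 2*cos s + 2*cos u + 2*cos(s-u)"

lemma Fq_nonneg: "Fq s u \<ge> 0"
proof -
  have "Fq s u = (1 + cos s + cos u)^2 + (sin s + sin u)^2"
    unfolding Fq_def cos_diff
    apply (simp add: power2_eq_square algebra_simps)
    using sin_cos_squared_add3[of s] sin_cos_squared_add3[of u] by linarith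
  then show ?thesis by simp
qed

lemma Fq_factor: "Fq s u - 1 = 8 * cos (s/2) * (cos (u/2) * cos ((s-u)/2))"
proof -
  define a where "a = s/2"
  define b where "b = u/2"
  have s: "s = 2*a" and u: "u = 2*b" by (simp_all add: a_def b_def)
  have su: "(s-u)/2 = a - b" by (simp add: a_def b_def diff_divide_distrib)
  have d: "s - u = 2*(a-b)" using s u by simp
  have e1: "sin a ^ 2 = 1 - cos a ^ 2" "sin b ^ 2 = 1 - cos b ^ 2"
    using sin_cos_squared_add[of a] sin_cos_squared_add[of b] by linarith+
  have "Fq s u - 1 = 2 + 2*(2*cos a^2 - 1) + 2*(2*cos b^2-1) + 2*(2*cos (a-b)^2 - 1)"
  proof -
    have c1: "cos s = 2*cos a^2 - 1" unfolding s by (rule cos_double_cos)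
    have c2: "cos u = 2*cos b^2 - 1" unfolding u by (rule cos_double_cos)
    have c3: "cos (s-u) = 2*cos (a-b)^2 - 1" unfolding d by (rule cos_double_cos)
    show ?thesis unfolding Fq_def c1 c2 c3 by simp
  qed
  also have "\<dots> = 8 * cos a * (cos b * cos (a-b))"
    unfolding cos_diff using e1 by algebra
  finally show ?thesis by (simp add: su a_def b_def)
qed

lemma Fq_le1_iff: "Fq s u \<le> 1 \<longleftrightarrow> cos (s/2) * (cos (u/2) * cos ((s-u)/2)) \<le> 0"
  using Fq_factor[of s u] by linarith

lemma cos_neg_range: "pi/2 < x \<Longrightarrow> x \<le> pi \<Longrightarrow> cos x < 0"
  using cos_gt_zero_pi[of "x - pi"] by (simp add: cos_diff)

lemma region1:
  assumes s: "0 < s" "s < pi" and u: "0 \<le> u" "u \<le> 2*pi"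
  shows "Fq s u \<le> 1 \<longleftrightarrow> pi \<le> u \<and> u \<le> pi + s"
proof -
  have ca: "cos (s/2) > 0" using s by (intro cos_gt_zero_pi) auto
  have "cos (u/2) * cos ((s-u)/2) \<le> 0 \<longleftrightarrow> pi \<le> u \<and> u \<le> pi + s"
  proof (cases "u < pi")
    case True
    have "cos (u/2) > 0" using True u by (intro cos_gt_zero_pi) auto
    moreover have "cos ((s-u)/2) > 0" using True u s by (intro cos_gt_zero_pi) auto
    ultimately show ?thesis using True by (simp add: not_le mult_pos_pos)
  next
    case False
    show ?thesis
    proof (cases "u = pi")
      case True then show ?thesis using s by simp
    next
      case False2: False
      have cb: "cos (u/2) < 0" using False False2 u by (intro cos_neg_range) auto
      show ?thesis
      proof (cases "u \<le> pi + s")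
        case True
        have "cos ((s-u)/2) \<ge> 0" using True False u s by (intro cos_ge_zero) auto
        then show ?thesis using cb True False by (simp add: mult_nonpos_nonneg)
      next
        case F3: False
        have "cos ((s-u)/2) = cos ((u-s)/2)" by (metis cos_minus minus_diff_eq minus_divide_left)
        moreover have "cos ((u-s)/2) < 0" using F3 u s by (intro cos_neg_range) auto
        ultimately show ?thesis using cb F3 by (simp add: mult_neg_neg not_le)
      qed
    qed
  qed
  then show ?thesis using ca Fq_le1_iff[of s u]
    by (simp add: mult_le_0_iff zero_less_mult_iff)
qed

lemma region2:
  assumes s: "pi < s" "s < 2*pi" and u: "0 \<le> u" "u \<le> 2*pi"
  shows "Fq s u \<le> 1 \<longleftrightarrow> s - pi \<le> u \<and> u \<le> pi"
proof -
  have ca: "cos (s/2) < 0" using s by (intro cos_neg_range) auto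
  have "cos (u/2) * cos ((s-u)/2) \<ge> 0 \<longleftrightarrow> s - pi \<le> u \<and> u \<le> pi"
  proof (cases "u > pi")
    case True
    have "cos (u/2) < 0" using True u by (intro cos_neg_range) auto
    moreover have "cos ((s-u)/2) > 0" using True u s by (intro cos_gt_zero_pi) auto
    ultimately show ?thesis using True by (simp add: not_le mult_neg_pos)
  next
    case False
    show ?thesis
    proof (cases "u = pi")
      case True then show ?thesis using s by simp
    next
      case False2: False
      have cb: "cos (u/2) > 0" using False False2 u by (intro cos_gt_zero_pi) auto
      show ?thesis
      proof (cases "s - pi \<le> u")
        case True
        have "cos ((s-u)/2) \<ge> 0" using True False u s by (intro cos_ge_zero) auto
        then show ?thesis using cb True False by simp
      next
        case F3: False
        have "cos ((s-u)/2) < 0" using F3 u s by (intro cos_neg_range) auto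
        then show ?thesis using cb F3 by (simp add: mult_pos_neg not_le)
      qed
    qed
  qed
  then show ?thesis using ca Fq_le1_iff[of s u]
    by (smt (verit) mult_neg_neg mult_neg_pos mult_nonpos_nonneg mult_nonneg_nonneg)
qed



definition hm :: "nat \<Rightarrow> real \<Rightarrow> real" where
  "hm m x = indicator {0..1} x * x^m"

lemma hm_meas[measurable]: "hm m \<in> borel_measurable borel"
  unfolding hm_def by measurable

lemma hm_bd: "\<bar>hm m x\<bar> \<le> 1"
  unfolding hm_def by (auto simp: indicator_def abs_mult power_le_one power_abs)

lemma Fq_meas[measurable]: "(\<lambda>x. Fq (fst x) (snd x)) \<in> borel_measurable borel"
  unfolding Fq_def borel_prod[symmetric] by measurable

lemma Fq_meas2[measurable]: "(\<lambda>(s, u). Fq s u) \<in> borel_measurable (lborel \<Otimes>\<^sub>M lborel)"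
  unfolding lborel_prod measurable_lborel2 case_prod_beta by (rule Fq_meas)

lemma inner1:
  assumes "0 < s" "s < pi"
  shows "(\<integral>u. indicator {0..2*pi} u * hm m (Fq s u) \<partial>lborel) = (\<integral>u. indicator {pi..pi+s} u *\<^sub>R (Fq s u)^m \<partial>lborel)"
proof (rule Bochner_Integration.integral_cong[OF refl])
  fix u
  show "indicator {0..2*pi} u * hm m (Fq s u) = indicator {pi..pi+s} u *\<^sub>R (Fq s u)^m"
  proof (cases "0 \<le> u \<and> u \<le> 2*pi")
    case True
    then show ?thesis using region1[OF assms, of u] Fq_nonneg[of s u]
      by (auto simp: hm_def indicator_def)
  next
    case False
    then show ?thesis using assms by (auto simp: hm_def indicator_def)
  qed
qed

lemma inner2:
  assumes "pi < s" "s < 2*pi"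
  shows "(\<integral>u. indicator {0..2*pi} u * hm m (Fq s u) \<partial>lborel) = (\<integral>u. indicator {s-pi..pi} u *\<^sub>R (Fq s u)^m \<partial>lborel)"
proof (rule Bochner_Integration.integral_cong[OF refl])
  fix u
  show "indicator {0..2*pi} u * hm m (Fq s u) = indicator {s-pi..pi} u *\<^sub>R (Fq s u)^m"
  proof (cases "0 \<le> u \<and> u \<le> 2*pi")
    case True
    then show ?thesis using region2[OF assms, of u] Fq_nonneg[of s u]
      by (auto simp: hm_def indicator_def)
  next
    case False
    then show ?thesis using assms by (auto simp: hm_def indicator_def)
  qed
qed

lemma J_meas: "(\<lambda>s. indicator {0..2*pi} s * (\<integral>u. indicator {0..2*pi} u * hm m (Fq s u) \<partial>lborel)) \<in> borel_measurable lborel"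
proof -
  have "(\<lambda>(s,u). indicator {0..2*pi} u * hm m (Fq s u)) \<in> borel_measurable (lborel \<Otimes>\<^sub>M lborel)"
    by measurable
  from lborel.borel_measurable_lebesgue_integral[OF this] show ?thesis
    by measurable
qed

lemma outer:
  fixes A B :: "real \<Rightarrow> real"
  assumes A: "continuous_on {0..pi} A" and B: "continuous_on {pi..2*pi} B"
    and IA: "\<And>s. 0 < s \<Longrightarrow> s < pi \<Longrightarrow> (\<integral>u. indicator {0..2*pi} u * hm m (Fq s u) \<partial>lborel) = A s"
    and IB: "\<And>s. pi < s \<Longrightarrow> s < 2*pi \<Longrightarrow> (\<integral>u. indicator {0..2*pi} u * hm m (Fq s u) \<partial>lborel) = B s"
  shows "(\<integral>s. indicator {0..2*pi} s * (\<integral>u. indicator {0..2*pi} u * hm m (Fq s u) \<partial>lborel) \<partial>lborel)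
     = (\<integral>s. indicator {0..pi} s *\<^sub>R A s \<partial>lborel) + (\<integral>s. indicator {pi..2*pi} s *\<^sub>R B s \<partial>lborel)"
proof -
  have iA: "integrable lborel (\<lambda>s. indicator {0..pi} s *\<^sub>R A s)"
    using borel_integrable_atLeastAtMost'[OF A] by (simp add: set_integrable_def)
  have iB: "integrable lborel (\<lambda>s. indicator {pi..2*pi} s *\<^sub>R B s)"
    using borel_integrable_atLeastAtMost'[OF B] by (simp add: set_integrable_def)
  have "(\<integral>s. indicator {0..2*pi} s * (\<integral>u. indicator {0..2*pi} u * hm m (Fq s u) \<partial>lborel) \<partial>lborel)
     = (\<integral>s. indicator {0..pi} s *\<^sub>R A s + indicator {pi..2*pi} s *\<^sub>R B s \<partial>lborel)"
  proof (rule integral_cong_AE)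
    show "(\<lambda>s. indicator {0..2*pi} s * (\<integral>u. indicator {0..2*pi} u * hm m (Fq s u) \<partial>lborel)) \<in> borel_measurable lborel"
      by (rule J_meas)
    show "(\<lambda>s. indicator {0..pi} s *\<^sub>R A s + indicator {pi..2*pi} s *\<^sub>R B s) \<in> borel_measurable lborel"
      using iA iB by auto
    have "AE s in lborel. s \<noteq> 0" "AE s in lborel. s \<noteq> pi" "AE s in lborel. s \<noteq> 2*pi"
      by (rule AE_lborel_singleton)+
    then show "AE s in lborel. indicator {0..2*pi} s * (\<integral>u. indicator {0..2*pi} u * hm m (Fq s u) \<partial>lborel)
             = indicator {0..pi} s *\<^sub>R A s + indicator {pi..2*pi} s *\<^sub>R B s"
    proof eventually_elim
      case (elim s)
      show ?case
      proof (cases "0 < s \<and> s < pi")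
        case True then show ?thesis using IA[of s] by (auto simp: indicator_def)
      next
        case False
        show ?thesis
        proof (cases "pi < s \<and> s < 2*pi")
          case True then show ?thesis using IB[of s] by (auto simp: indicator_def)
        next
          case False2: False
          then show ?thesis using False elim by (auto simp: indicator_def)
        qed
      qed
    qed
  qed
  also have "\<dots> = (\<integral>s. indicator {0..pi} s *\<^sub>R A s \<partial>lborel) + (\<integral>s. indicator {pi..2*pi} s *\<^sub>R B s \<partial>lborel)"
    by (rule Bochner_Integration.integral_add[OF iA iB])
  finally show ?thesis .
qed



lemma ReP2: "Re (P2 (cis s) (cis u)) = Fq s u"
proof -
  have "cos (s-u) = cos s * cos u + sin s * sin u" by (rule cos_diff)
  then show ?thesis
    unfolding P2_def Fq_def
    by (simp add: inverse_complex_def cis.sel power2_eq_square algebra_simps)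
qed

lemma Phi_meas: "(\<lambda>(x1, x2). Re (P2 x1 x2)) \<in> borel_measurable (borel :: (complex \<times> complex) measure)"
  unfolding P2_def borel_prod[symmetric] by measurable

lemma cis_meas[measurable]: "cis \<in> borel_measurable borel"
  by (intro borel_measurable_continuous_onI continuous_intros)

lemma psi_meas: "(\<lambda>(s, u). (cis s, cis u)) \<in> measurable (borel :: (real \<times> real) measure) borel"
  unfolding borel_prod[symmetric] by measurable

lemma emeas_R: "emeasure lborel ({0..2*pi} \<times> {0..2*pi::real}) = ennreal (4*pi^2)"
proof -
  have "emeasure (lborel \<Otimes>\<^sub>M lborel) ({0..2*pi} \<times> {0..2*pi::real}) = ennreal (2*pi) * ennreal (2*pi)"
    by (subst lborel.emeasure_pair_measure_Times) auto
  also have "\<dots> = ennreal (4*pi^2)" by (simp add: ennreal_mult'[symmetric] power2_eq_square)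
  finally show ?thesis by (simp add: lborel_prod)
qed

lemma plumbing:
  fixes a h :: "real \<Rightarrow> real"
  assumes a_meas: "a \<in> borel_measurable borel"
    and a_density: "distr haar_T2 borel (\<lambda>(x1, x2). Re (P2 x1 x2))
                      = density lborel (\<lambda>x. ennreal (a x))"
    and h_meas: "h \<in> borel_measurable borel" and h_bd: "\<And>x. \<bar>h x\<bar> \<le> 1"
  shows "(\<integral>x. h x \<partial>(density lborel (\<lambda>x. ennreal (a x)))) =
     (\<integral>s. indicator {0..2*pi} s * (\<integral>u. indicator {0..2*pi} u * h (Fq s u) \<partial>lborel) \<partial>lborel) / (4*pi^2)"
proof -
  let ?R = "{0..2*pi} \<times> {0..2*pi::real}"
  let ?U = "uniform_measure lborel ?R"
  have [measurable]: "h \<in> borel_measurable borel" by (fact h_meas)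
  have Rm[measurable]: "?R \<in> sets (borel::(real\<times>real) measure)"
    by (intro borel_closed closed_Times closed_atLeastAtMost)
  have "(\<integral>x. h x \<partial>(density lborel (\<lambda>x. ennreal (a x)))) =
        (\<integral>x. h x \<partial>(distr haar_T2 borel (\<lambda>(x1, x2). Re (P2 x1 x2))))"
    by (simp add: a_density)
  also have "\<dots> = (\<integral>z. h ((\<lambda>(x1, x2). Re (P2 x1 x2)) z) \<partial>haar_T2)"
    apply (rule integral_distr)
    apply (subst measurable_cong_sets[where M'=borel and N'=borel])
      apply (simp add: haar_T2_def)
     apply simp
    apply (rule Phi_meas)
    apply (rule h_meas)
    done
  also have "\<dots> = (\<integral>y. h ((\<lambda>(x1, x2). Re (P2 x1 x2)) ((\<lambda>(s, u). (cis s, cis u)) y)) \<partial>?U)"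
    unfolding haar_T2_def
    apply (rule integral_distr)
    apply (subst measurable_cong_sets[where M'=borel and N'=borel])
      apply simp
     apply simp
    apply (rule psi_meas)
    using Phi_meas h_meas by measurable
  also have "\<dots> = (\<integral>y. h (Fq (fst y) (snd y)) \<partial>?U)"
    by (rule Bochner_Integration.integral_cong) (auto simp: ReP2)
  also have "?U = density lborel (\<lambda>y. ennreal (indicator ?R y / (4*pi^2)))"
  proof -
    have "1 / ennreal (4*pi^2) = ennreal (1 / (4*pi^2))"
      using divide_ennreal[of 1 "4*pi^2"] by simp
    then have "(\<lambda>x. indicator ?R x / emeasure lborel ?R) = (\<lambda>y. ennreal (indicator ?R y / (4*pi^2)))"
      unfolding emeas_R by (auto simp: indicator_def)
    then show ?thesis unfolding uniform_measure_def by simp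
  qed
  also have "(\<integral>y. h (Fq (fst y) (snd y)) \<partial>density lborel (\<lambda>y. ennreal (indicator ?R y / (4*pi^2)))) =
     (\<integral>y. (indicator ?R y / (4*pi^2)) * h (Fq (fst y) (snd y)) \<partial>lborel)"
    using Rm by (subst integral_density) (auto intro!: borel_measurable_divide borel_measurable_indicator)
  also have "\<dots> = (\<integral>y. (indicator ?R y / (4*pi^2)) * h (Fq (fst y) (snd y)) \<partial>(lborel \<Otimes>\<^sub>M lborel))"
    by (simp add: lborel_prod)
  also have "\<dots> = (\<integral>s. (\<integral>u. (indicator ?R (s,u) / (4*pi^2)) * h (Fq s u) \<partial>lborel) \<partial>lborel)"
  proof -
    have "integrable (lborel \<Otimes>\<^sub>M lborel) (\<lambda>y. indicator ?R y / (4*pi^2) * h (Fq (fst y) (snd y)))"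
    proof (rule Bochner_Integration.integrable_bound[where f="indicator ?R :: _ \<Rightarrow> real"])
      show "integrable (lborel \<Otimes>\<^sub>M lborel) (indicator ?R :: _ \<Rightarrow> real)"
        using emeas_R by (simp add: lborel_prod integrable_indicator_iff)
      show "(\<lambda>y. indicator ?R y / (4*pi^2) * h (Fq (fst y) (snd y))) \<in> borel_measurable (lborel \<Otimes>\<^sub>M lborel)"
        unfolding lborel_prod measurable_lborel1 by measurable
      show "AE y in lborel \<Otimes>\<^sub>M lborel. norm (indicator ?R y / (4*pi^2) * h (Fq (fst y) (snd y))) \<le> norm (indicator ?R y :: real)"
      proof (intro AE_I2)
        fix y
        have "pi^2 \<ge> 1" using pi_gt3 by (simp add: power2_eq_square) (smt (verit) mult_le_cancel_left1)
        then show "norm (indicator ?R y / (4*pi^2) * h (Fq (fst y) (snd y))) \<le> norm (indicator ?R y :: real)"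
          using h_bd[of "Fq (fst y) (snd y)"]
          by (auto simp: indicator_def abs_mult field_simps intro: order_trans[OF mult_left_le_one_le])
      qed
    qed
    from lborel_pair.integral_fst'[OF this] show ?thesis by simp
  qed
  also have "\<dots> = (\<integral>s. indicator {0..2*pi} s * (\<integral>u. indicator {0..2*pi} u * h (Fq s u) \<partial>lborel) / (4*pi^2) \<partial>lborel)"
    by (rule Bochner_Integration.integral_cong; simp add: indicator_times[of "{0..2*pi}" "{0..2*pi}"]
          flip: integral_mult_right_zero integral_divide_zero)
       (rule Bochner_Integration.integral_cong; simp add: indicator_def)
  also have "\<dots> = (\<integral>s. indicator {0..2*pi} s * (\<integral>u. indicator {0..2*pi} u * h (Fq s u) \<partial>lborel) \<partial>lborel) / (4*pi^2)"
    by simp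
  finally show ?thesis .
qed



lemma FTC_real:
  fixes F f :: "real \<Rightarrow> real"
  assumes "a \<le> b" and "\<And>x. (F has_real_derivative f x) (at x)" and "continuous_on {a..b} f"
  shows "(\<integral>x. indicator {a..b} x *\<^sub>R f x \<partial>lborel) = F b - F a"
  by (rule integral_FTC_atLeastAtMost[OF assms(1) _ assms(3)])
     (simp add: has_real_derivative_iff_has_vector_derivative[symmetric] has_field_derivative_at_within assms(2))

lemma J0: "(\<integral>s. indicator {0..2*pi} s * (\<integral>u. indicator {0..2*pi} u * hm 0 (Fq s u) \<partial>lborel) \<partial>lborel) = pi^2"
proof -
  have "(\<integral>s. indicator {0..2*pi} s * (\<integral>u. indicator {0..2*pi} u * hm 0 (Fq s u) \<partial>lborel) \<partial>lborel)
     = (\<integral>s. indicator {0..pi} s *\<^sub>R s \<partial>lborel) + (\<integral>s. indicator {pi..2*pi} s *\<^sub>R (2*pi - s) \<partial>lborel)"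
  proof (rule outer)
    show "continuous_on {0..pi} (\<lambda>s. s::real)" by (intro continuous_intros)
    show "continuous_on {pi..2*pi} (\<lambda>s. 2*pi - s::real)" by (intro continuous_intros)
  next
    fix s :: real assume s: "0 < s" "s < pi"
    have "(\<integral>u. indicator {pi..pi+s} u *\<^sub>R (1::real) \<partial>lborel) = (pi + s) - pi"
      using s by (intro FTC_real[where F="\<lambda>u. u"]) (auto intro!: derivative_eq_intros continuous_intros)
    then show "(\<integral>u. indicator {0..2*pi} u * hm 0 (Fq s u) \<partial>lborel) = s"
      using inner1[OF s, of 0] by simp
  next
    fix s :: real assume s: "pi < s" "s < 2*pi"
    have "(\<integral>u. indicator {s-pi..pi} u *\<^sub>R (1::real) \<partial>lborel) = pi - (s - pi)"
      using s by (intro FTC_real[where F="\<lambda>u. u"]) (auto intro!: derivative_eq_intros continuous_intros)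
    then show "(\<integral>u. indicator {0..2*pi} u * hm 0 (Fq s u) \<partial>lborel) = 2*pi - s"
      using inner2[OF s, of 0] by simp
  qed
  also have "(\<integral>s. indicator {0..pi} s *\<^sub>R s \<partial>lborel) = pi^2/2 - 0^2/2"
    by (rule FTC_real) (auto intro!: derivative_eq_intros continuous_intros)
  also have "(\<integral>s. indicator {pi..2*pi} s *\<^sub>R (2*pi - s) \<partial>lborel) = (2*pi*(2*pi) - (2*pi)^2/2) - (2*pi*pi - pi^2/2)"
    by (rule FTC_real[where F="\<lambda>x. 2*pi*x - x^2/2"]) (auto intro!: derivative_eq_intros continuous_intros)
  finally show ?thesis by (simp add: power2_eq_square field_simps)
qed

lemma J1: "(\<integral>s. indicator {0..2*pi} s * (\<integral>u. indicator {0..2*pi} u * hm 1 (Fq s u) \<partial>lborel) \<partial>lborel) = 3*pi^2 - 24"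
proof -
  let ?A = "\<lambda>x. (3 + 2*cos x)*x - 4* sin x"
  let ?B = "\<lambda>x. (3 + 2*cos x)*(2*pi - x) + 4* sin x"
  let ?G = "\<lambda>s u. (3 + 2*cos s)*u + 2* sin u - 2* sin (s-u)"
  have dG: "((?G s) has_real_derivative Fq s u) (at u)" for s u
    unfolding Fq_def by (auto intro!: derivative_eq_intros)
  have cF: "continuous_on S (\<lambda>u. Fq s u)" for S s
    unfolding Fq_def by (intro continuous_intros)
  have "(\<integral>s. indicator {0..2*pi} s * (\<integral>u. indicator {0..2*pi} u * hm 1 (Fq s u) \<partial>lborel) \<partial>lborel)
     = (\<integral>s. indicator {0..pi} s *\<^sub>R ?A s \<partial>lborel) + (\<integral>s. indicator {pi..2*pi} s *\<^sub>R ?B s \<partial>lborel)"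
  proof (rule outer)
    show "continuous_on {0..pi} ?A" by (intro continuous_intros)
    show "continuous_on {pi..2*pi} ?B" by (intro continuous_intros)
  next
    fix s :: real assume s: "0 < s" "s < pi"
    have "(\<integral>u. indicator {pi..pi+s} u *\<^sub>R Fq s u \<partial>lborel) = ?G s (pi + s) - ?G s pi"
      using s by (intro FTC_real dG cF) auto
    also have "\<dots> = ?A s" by (simp add: sin_add sin_diff algebra_simps)
    finally show "(\<integral>u. indicator {0..2*pi} u * hm 1 (Fq s u) \<partial>lborel) = ?A s"
      using inner1[OF s, of 1] by simp
  next
    fix s :: real assume s: "pi < s" "s < 2*pi"
    have "(\<integral>u. indicator {s-pi..pi} u *\<^sub>R Fq s u \<partial>lborel) = ?G s pi - ?G s (s - pi)"
      using s by (intro FTC_real dG cF) auto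
    also have "\<dots> = ?B s" by (simp add: sin_add sin_diff algebra_simps)
    finally show "(\<integral>u. indicator {0..2*pi} u * hm 1 (Fq s u) \<partial>lborel) = ?B s"
      using inner2[OF s, of 1] by simp
  qed
  also have "(\<integral>s. indicator {0..pi} s *\<^sub>R ?A s \<partial>lborel) =
      (\<lambda>x. 3*x^2/2 + 2*(x* sin x + cos x) + 4*cos x) pi - (\<lambda>x. 3*x^2/2 + 2*(x* sin x + cos x) + 4*cos x) 0"
    by (rule FTC_real) (auto intro!: derivative_eq_intros continuous_intros simp: algebra_simps)
  also have "(\<integral>s. indicator {pi..2*pi} s *\<^sub>R ?B s \<partial>lborel) =
      (\<lambda>x. 6*pi*x - 3*x^2/2 + 2*(2*pi - x)* sin x - 6*cos x) (2*pi) - (\<lambda>x. 6*pi*x - 3*x^2/2 + 2*(2*pi - x)* sin x - 6*cos x) pi"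
    by (rule FTC_real) (auto intro!: derivative_eq_intros continuous_intros simp: algebra_simps)
  finally show ?thesis by (simp add: power2_eq_square field_simps)
qed


lemma c_eq:
  fixes a :: "real \<Rightarrow> real" and c :: "real fps"
  assumes a_meas: "a \<in> borel_measurable borel"
    and a_nonneg: "\<And>x. a x \<ge> 0"
    and a_density: "distr haar_T2 borel (\<lambda>(x1, x2). Re (P2 x1 x2))
                      = density lborel (\<lambda>x. ennreal (a x))"
    and c_def: "\<And>m. c $ m = (LBINT l:{0..1}. l ^ m * a l)"
  shows "c $ m = (\<integral>s. indicator {0..2*pi} s * (\<integral>u. indicator {0..2*pi} u * hm m (Fq s u) \<partial>lborel) \<partial>lborel) / (4*pi^2)"
proof -
  have [measurable]: "a \<in> borel_measurable borel" by (fact a_meas)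
  have "c $ m = (\<integral>l. indicator {0..1} l *\<^sub>R (l ^ m * a l) \<partial>lborel)"
    by (simp add: c_def set_lebesgue_integral_def)
  also have "\<dots> = (\<integral>x. a x *\<^sub>R hm m x \<partial>lborel)"
    by (rule Bochner_Integration.integral_cong) (auto simp: hm_def)
  also have "\<dots> = (\<integral>x. hm m x \<partial>(density lborel (\<lambda>x. ennreal (a x))))"
    by (subst integral_density) (auto simp: a_nonneg)
  also have "\<dots> = (\<integral>s. indicator {0..2*pi} s * (\<integral>u. indicator {0..2*pi} u * hm m (Fq s u) \<partial>lborel) \<partial>lborel) / (4*pi^2)"
    by (rule plumbing[OF a_meas a_density hm_meas hm_bd])
  finally show ?thesis .
qed

theorem lemma5p3:
  fixes a :: "real \<Rightarrow> real" and c :: "real fps"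
  assumes a_meas: "a \<in> borel_measurable borel"
    and a_nonneg: "\<And>x. a x \<ge> 0"
    and a_supp: "\<And>x. x \<notin> {0..9} \<Longrightarrow> a x = 0"
    and a_density: "distr haar_T2 borel (\<lambda>(x1, x2). Re (P2 x1 x2))
                      = density lborel (\<lambda>x. ennreal (a x))"
    and c_def: "\<And>m. c $ m = (LBINT l:{0..1}. l ^ m * a l)"
  shows "c $ 0 = 1/4
     \<and> neg_part (op_subst Ltilde2 (fps_to_fls c)) = fls_const (- 6 / pi\<^sup>2) * fls_X_inv"
proof -
  have pi2: "pi^2 \<noteq> 0" by simp
  have c0: "c $ 0 = 1/4"
    using c_eq[OF a_meas a_nonneg a_density c_def, of 0] J0 pi2 by simp
  have c1: "c $ 1 = (3*pi^2 - 24) / (4*pi^2)"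
    using c_eq[OF a_meas a_nonneg a_density c_def, of 1] J1 by simp
  have eq: "c $ 1 - 3 * c $ 0 = - 6 / pi^2"
    unfolding c0 c1 using pi2 by (simp add: field_simps)
  show ?thesis using c0 unfolding neg_op eq by simp
qed

end
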